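(* Let $S$ be a completely simple semigroup which is the union $S=S_1\cup S_2$ of two left simple subsemigroups $S_1,S_2$. Then either $S$ is left simple, or the union is disjoint and $S_1$ and $S_2$ are the minimal left ideals of $S$.
   Context: A semigroup is completely simple if it has no zero element, has no proper two-sided ideal, and contains an idempotent that is minimal for the order $p\le q\iff p=pq=qp$ on idempotents. A semigroup is left simple if it has no proper left ideal (a left ideal of $S$ being a non-empty $I\subset S$ with $SI\subset I$). *)

theory Defs
  imports Main
begin

(* Semigroups are modelled as subsets of an ambient type of class semigroup_mult
   that are closed under the (associative) multiplication. *)

definition subsemigroup :: "'a::semigroup_mult set \<Rightarrow> 'a set \<Rightarrow> bool" where
  "subsemigroup T S \<longleftrightarrow> T \<subseteq> S \<and> (\<forall>x\<in>T. \<forall>y\<in>T. x * y \<in> T)"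

definition left_ideal :: "'a::semigroup_mult set \<Rightarrow> 'a set \<Rightarrow> bool" where
  "left_ideal I S \<longleftrightarrow> I \<noteq> {} \<and> I \<subseteq> S \<and> (\<forall>s\<in>S. \<forall>x\<in>I. s * x \<in> I)"

definition two_sided_ideal :: "'a::semigroup_mult set \<Rightarrow> 'a set \<Rightarrow> bool" where
  "two_sided_ideal I S \<longleftrightarrow> I \<noteq> {} \<and> I \<subseteq> S \<and>
     (\<forall>s\<in>S. \<forall>x\<in>I. s * x \<in> I \<and> x * s \<in> I)"

definition left_simple :: "'a::semigroup_mult set \<Rightarrow> bool" where
  "left_simple S \<longleftrightarrow> (\<forall>I. left_ideal I S \<longrightarrow> I = S)"

definition has_zero :: "'a::semigroup_mult set \<Rightarrow> bool" where
  "has_zero S \<longleftrightarrow> (\<exists>z\<in>S. \<forall>x\<in>S. z * x = z \<and> x * z = z)"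

definition idempotents :: "'a::semigroup_mult set \<Rightarrow> 'a set" where
  "idempotents S = {e\<in>S. e * e = e}"

definition idem_le :: "'a::semigroup_mult \<Rightarrow> 'a \<Rightarrow> bool" where
  "idem_le p q \<longleftrightarrow> p = p * q \<and> p = q * p"

definition completely_simple :: "'a::semigroup_mult set \<Rightarrow> bool" where
  "completely_simple S \<longleftrightarrow>
     (\<forall>x\<in>S. \<forall>y\<in>S. x * y \<in> S) \<and>
     \<not> has_zero S \<and>
     (\<forall>I. two_sided_ideal I S \<longrightarrow> I = S) \<and>
     (\<exists>e\<in>idempotents S. \<forall>f\<in>idempotents S. idem_le f e \<longrightarrow> f = e)"

definition minimal_left_ideal :: "'a::semigroup_mult set \<Rightarrow> 'a set \<Rightarrow> bool" where
  "minimal_left_ideal L S \<longleftrightarrow> left_ideal L S \<and> (\<forall>J. left_ideal J S \<longrightarrow> J \<subseteq> L \<longrightarrow> J = L)"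

end

theory Submission
  imports Defs
begin

lemma ls_sub:
  assumes "left_simple T" "subsemigroup T S" "left_ideal L S" "a \<in> L" "a \<in> T"
  shows "T \<subseteq> L"
proof -
  have "left_ideal ((\<lambda>x. x * a) ` T) T"
    using assms(2,5) unfolding left_ideal_def subsemigroup_def
    by (auto simp: mult.assoc[symmetric])
  hence eq: "(\<lambda>x. x * a) ` T = T" using assms(1) unfolding left_simple_def by blast
  show ?thesis
  proof
    fix t assume "t \<in> T"
    then obtain x where "x \<in> T" "t = x * a" using eq by (metis imageE)
    thus "t \<in> L" using assms(2,3,4) unfolding left_ideal_def subsemigroup_def by blast
  qed
qed

lemma main_case:
  fixes S S1 S2 :: "'a::semigroup_mult set"
  assumes cs: "completely_simple S"
    and SU: "S = S1 \<union> S2"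
    and ss1: "subsemigroup S1 S" and ss2: "subsemigroup S2 S"
    and ls1: "left_simple S1" and ls2: "left_simple S2"
    and L: "left_ideal L S" "L \<noteq> S" "a \<in> L" "a \<in> S1"
  shows "S1 \<inter> S2 = {} \<and> {L. minimal_left_ideal L S} = {S1, S2}"
proof -
  have S1L: "S1 \<subseteq> L" using ls_sub[OF ls1 ss1 L(1) L(3,4)] .
  have LS2: "L \<inter> S2 = {}"
  proof (rule ccontr)
    assume "L \<inter> S2 \<noteq> {}"
    then obtain b where "b \<in> L" "b \<in> S2" by blast
    hence "S2 \<subseteq> L" using ls_sub[OF ls2 ss2 L(1)] by blast
    thus False using S1L L(1,2) SU unfolding left_ideal_def by blast
  qed
  have LS1: "L = S1" using LS2 S1L L(1) SU unfolding left_ideal_def by blast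
  have disj: "S1 \<inter> S2 = {}" using LS1 LS2 by blast
  have li1: "left_ideal S1 S" using L(1) LS1 by simp
  have clos: "\<forall>x\<in>S. \<forall>y\<in>S. x * y \<in> S" using cs unfolding completely_simple_def by blast
  have tsi: "\<forall>I. two_sided_ideal I S \<longrightarrow> I = S" using cs unfolding completely_simple_def by blast
  have "two_sided_ideal {x * s | x s. x \<in> S1 \<and> s \<in> S} S"
    unfolding two_sided_ideal_def
  proof (intro conjI)
    show "{x * s | x s. x \<in> S1 \<and> s \<in> S} \<noteq> {}" using L(4) SU by blast
    show "{x * s | x s. x \<in> S1 \<and> s \<in> S} \<subseteq> S" using clos SU by blast
    show "\<forall>s\<in>S. \<forall>x\<in>{x * s |x s. x \<in> S1 \<and> s \<in> S}.
        s * x \<in> {x * s |x s. x \<in> S1 \<and> s \<in> S} \<and> x * s \<in> {x * s |x s. x \<in> S1 \<and> s \<in> S}"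
    proof (intro ballI conjI)
      fix t z assume t: "t \<in> S" and z: "z \<in> {x * s |x s. x \<in> S1 \<and> s \<in> S}"
      then obtain x s where xs: "z = x * s" "x \<in> S1" "s \<in> S" by blast
      have "t * z = (t * x) * s" using xs by (simp add: mult.assoc)
      moreover have "t * x \<in> S1" using li1 t xs unfolding left_ideal_def by blast
      ultimately show "t * z \<in> {x * s |x s. x \<in> S1 \<and> s \<in> S}" using xs by blast
      have "z * t = x * (s * t)" using xs by (simp add: mult.assoc)
      moreover have "s * t \<in> S" using clos t xs by blast
      ultimately show "z * t \<in> {x * s |x s. x \<in> S1 \<and> s \<in> S}" using xs by blast
    qed
  qed
  hence S1S: "{x * s | x s. x \<in> S1 \<and> s \<in> S} = S" using tsi by blast
  obtain y where y: "y \<in> S2" "y \<notin> S1" using L(2) LS1 SU by blast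
  then obtain x s where xs: "y = x * s" "x \<in> S1" "s \<in> S" using S1S SU by blast
  define M where "M = (\<lambda>z. z * s) ` S1"
  have liM: "left_ideal M S"
    unfolding left_ideal_def M_def
  proof (intro conjI)
    show "(\<lambda>z. z * s) ` S1 \<noteq> {}" using xs by blast
    show "(\<lambda>z. z * s) ` S1 \<subseteq> S" using clos SU xs by blast
    show "\<forall>sa\<in>S. \<forall>xa\<in>(\<lambda>z. z * s) ` S1. sa * xa \<in> (\<lambda>z. z * s) ` S1"
    proof (intro ballI)
      fix t w assume t: "t \<in> S" and "w \<in> (\<lambda>z. z * s) ` S1"
      then obtain z where z: "z \<in> S1" "w = z * s" by blast
      have "t * w = (t * z) * s" using z by (simp add: mult.assoc)
      moreover have "t * z \<in> S1" using li1 t z unfolding left_ideal_def by blast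
      ultimately show "t * w \<in> (\<lambda>z. z * s) ` S1" by blast
    qed
  qed
  have yM: "y \<in> M" using xs M_def by blast
  have MS1: "M \<inter> S1 = {}"
  proof (rule ccontr)
    assume "M \<inter> S1 \<noteq> {}"
    then obtain c where c: "c \<in> M" "c \<in> S1" by blast
    define K where "K = {z \<in> S1. z * s \<in> S1}"
    obtain z0 where z0: "z0 \<in> S1" "c = z0 * s" using c M_def by blast
    have liK: "left_ideal K S"
      unfolding left_ideal_def
    proof (intro conjI)
      show "K \<noteq> {}" using z0 c K_def by blast
      show "K \<subseteq> S" using K_def SU by blast
      show "\<forall>sa\<in>S. \<forall>xa\<in>K. sa * xa \<in> K"
      proof (intro ballI)
        fix t w assume t: "t \<in> S" and w: "w \<in> K"
        have "t * w \<in> S1" using li1 t w K_def unfolding left_ideal_def by blast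
        moreover have "(t * w) * s = t * (w * s)" by (simp add: mult.assoc)
        moreover have "t * (w * s) \<in> S1" using li1 t w K_def unfolding left_ideal_def by blast
        ultimately show "t * w \<in> K" using K_def by simp
      qed
    qed
    have "S1 \<subseteq> K" using ls_sub[OF ls1 ss1 liK, of z0] z0 c K_def by blast
    hence "y \<in> S1" using xs K_def by blast
    thus False using y by blast
  qed
  have MS2: "M \<subseteq> S2" using MS1 liM SU unfolding left_ideal_def by blast
  have "S2 \<subseteq> M" using ls_sub[OF ls2 ss2 liM yM y(1)] .
  hence M2: "M = S2" using MS2 by blast
  have li2: "left_ideal S2 S" using liM M2 by simp
  have meet: "\<And>J. left_ideal J S \<Longrightarrow> S1 \<subseteq> J \<or> S2 \<subseteq> J"
  proof -
    fix J assume J: "left_ideal J S"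
    then obtain b where b: "b \<in> J" unfolding left_ideal_def by blast
    hence "b \<in> S1 \<or> b \<in> S2" using J SU unfolding left_ideal_def by blast
    thus "S1 \<subseteq> J \<or> S2 \<subseteq> J" using ls_sub[OF ls1 ss1 J b] ls_sub[OF ls2 ss2 J b] by blast
  qed
  have m1: "minimal_left_ideal S1 S"
    unfolding minimal_left_ideal_def
  proof (intro conjI allI impI)
    show "left_ideal S1 S" by (rule li1)
    fix J assume "left_ideal J S" "J \<subseteq> S1"
    thus "J = S1" using meet[of J] disj li2 unfolding left_ideal_def by blast
  qed
  have m2: "minimal_left_ideal S2 S"
    unfolding minimal_left_ideal_def
  proof (intro conjI allI impI)
    show "left_ideal S2 S" by (rule li2)
    fix J assume "left_ideal J S" "J \<subseteq> S2"
    thus "J = S2" using meet[of J] disj li1 unfolding left_ideal_def by blast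
  qed
  have "{L. minimal_left_ideal L S} = {S1, S2}"
  proof
    show "{S1, S2} \<subseteq> {L. minimal_left_ideal L S}" using m1 m2 by blast
    show "{L. minimal_left_ideal L S} \<subseteq> {S1, S2}"
    proof
      fix J assume "J \<in> {L. minimal_left_ideal L S}"
      hence J: "left_ideal J S" "\<forall>K. left_ideal K S \<longrightarrow> K \<subseteq> J \<longrightarrow> K = J"
        unfolding minimal_left_ideal_def by auto
      show "J \<in> {S1, S2}" using meet[OF J(1)] J(2) li1 li2 by blast
    qed
  qed
  thus ?thesis using disj by blast
qed

theorem lemma2p10:
  fixes S S1 S2 :: "'a::semigroup_mult set"
  assumes "completely_simple S"
    and "S = S1 \<union> S2"
    and "subsemigroup S1 S" and "subsemigroup S2 S"
    and "left_simple S1" and "left_simple S2"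
  shows "left_simple S \<or>
         (S1 \<inter> S2 = {} \<and> {L. minimal_left_ideal L S} = {S1, S2})"
proof (cases "left_simple S")
  case True thus ?thesis by blast
next
  case False
  then obtain L where L: "left_ideal L S" "L \<noteq> S" unfolding left_simple_def by blast
  then obtain a where a: "a \<in> L" unfolding left_ideal_def by blast
  hence "a \<in> S1 \<or> a \<in> S2" using L assms(2) unfolding left_ideal_def by blast
  thus ?thesis
  proof
    assume "a \<in> S1"
    thus ?thesis using main_case[OF assms L a] by blast
  next
    assume "a \<in> S2"
    have "S = S2 \<union> S1" using assms(2) by blast
    from main_case[OF assms(1) this assms(4,3,6,5) L a \<open>a \<in> S2\<close>]
    show ?thesis by blast
  qed
qed

end
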